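(* Let $D=(Q,\Sigma,\delta,q_0,A)$ and $D'=(Q',\Sigma,\delta',q_0',A')$ be DFAs over the same alphabet with $L(D)\sim L(D')$. Then $S(D)=S(D')$.
   Context: All DFAs are complete and all states are reachable from the start state. For languages, $L\sim L'$ means the symmetric difference $L\triangle L'$ is finite; this is an equivalence relation, and $[L]$ denotes the equivalence class (language-class) of $L$. For a state $q$ of a DFA $D=(Q,\Sigma,\delta,q_0,A)$, the \emph{induced language} $L(q)$ is the language recognized by $(Q,\Sigma,\delta,q,A)$. Define $S(D)=\{[L(q)]: q\in Q\}$. *)

theory Defs
  imports Main
begin

definition delta_hat :: "('s \<Rightarrow> 'a \<Rightarrow> 's) \<Rightarrow> 's \<Rightarrow> 'a list \<Rightarrow> 's" where
  "delta_hat \<delta> q w = foldl \<delta> q w"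

definition dfa :: "'a set \<Rightarrow> 's set \<Rightarrow> ('s \<Rightarrow> 'a \<Rightarrow> 's) \<Rightarrow> 's \<Rightarrow> 's set \<Rightarrow> bool" where
  "dfa \<Sigma> Q \<delta> q0 A \<longleftrightarrow>
     finite \<Sigma> \<and> finite Q \<and> q0 \<in> Q \<and> A \<subseteq> Q \<and>
     (\<forall>q\<in>Q. \<forall>a\<in>\<Sigma>. \<delta> q a \<in> Q) \<and>
     (\<forall>q\<in>Q. \<exists>w\<in>lists \<Sigma>. delta_hat \<delta> q0 w = q)"

definition lang :: "'a set \<Rightarrow> ('s \<Rightarrow> 'a \<Rightarrow> 's) \<Rightarrow> 's \<Rightarrow> 's set \<Rightarrow> 'a list set" where
  "lang \<Sigma> \<delta> q A = {w \<in> lists \<Sigma>. delta_hat \<delta> q w \<in> A}"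

definition almost_eq :: "'a list set \<Rightarrow> 'a list set \<Rightarrow> bool" where
  "almost_eq L L' \<longleftrightarrow> finite ((L - L') \<union> (L' - L))"

definition lang_class :: "'a set \<Rightarrow> 'a list set \<Rightarrow> 'a list set set" where
  "lang_class \<Sigma> L = {L'. L' \<subseteq> lists \<Sigma> \<and> almost_eq L L'}"

definition S_dfa :: "'a set \<Rightarrow> 's set \<Rightarrow> ('s \<Rightarrow> 'a \<Rightarrow> 's) \<Rightarrow> 's set \<Rightarrow> 'a list set set set" where
  "S_dfa \<Sigma> Q \<delta> A = (\<lambda>q. lang_class \<Sigma> (lang \<Sigma> \<delta> q A)) ` Q"

end

theory Submission
  imports Defs
begin

lemma quot_lang:
  assumes "w \<in> lists \<Sigma>"
  shows "lang \<Sigma> \<delta> (delta_hat \<delta> q w) A = {v. w @ v \<in> lang \<Sigma> \<delta> q A}"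
  using assms by (auto simp: lang_def delta_hat_def)

lemma almost_eq_sym: "almost_eq L M \<Longrightarrow> almost_eq M L"
  unfolding almost_eq_def by (simp add: Un_commute)

lemma almost_eq_trans: "almost_eq L M \<Longrightarrow> almost_eq M N \<Longrightarrow> almost_eq L N"
  unfolding almost_eq_def
  by (rule finite_subset[of _ "(L - M) \<union> (M - L) \<union> ((M - N) \<union> (N - M))"]) auto

lemma almost_eq_quot:
  assumes "almost_eq L M"
  shows "almost_eq {v. w @ v \<in> L} {v. w @ v \<in> M}"
proof -
  have "finite ((\<lambda>v. w @ v) -` ((L - M) \<union> (M - L)))"
    using assms unfolding almost_eq_def by (rule finite_vimageI) (auto simp: inj_def)
  then show ?thesis unfolding almost_eq_def
    by (rule finite_subset[rotated]) auto
qed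

lemma class_eq: "almost_eq L M \<Longrightarrow> lang_class \<Sigma> L = lang_class \<Sigma> M"
  unfolding lang_class_def
  by (auto intro: almost_eq_trans almost_eq_sym)

lemma one_dir:
  assumes "dfa \<Sigma> Q \<delta> q0 A"
    and "dfa \<Sigma> Q' \<delta>' q0' A'"
    and "almost_eq (lang \<Sigma> \<delta> q0 A) (lang \<Sigma> \<delta>' q0' A')"
  shows "S_dfa \<Sigma> Q \<delta> A \<subseteq> S_dfa \<Sigma> Q' \<delta>' A'"
proof
  fix C assume "C \<in> S_dfa \<Sigma> Q \<delta> A"
  then obtain q where q: "q \<in> Q" and C: "C = lang_class \<Sigma> (lang \<Sigma> \<delta> q A)"
    unfolding S_dfa_def by auto
  from assms(1) q obtain w where w: "w \<in> lists \<Sigma>" "delta_hat \<delta> q0 w = q"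
    unfolding dfa_def by blast
  let ?q' = "delta_hat \<delta>' q0' w"
  have inQ: "?q' \<in> Q'"
  proof -
    have "\<forall>p\<in>Q'. foldl \<delta>' p w \<in> Q'" using w(1) assms(2)
      by (induction w) (auto simp: dfa_def)
    then show ?thesis using assms(2) by (simp add: dfa_def delta_hat_def)
  qed
  have "almost_eq (lang \<Sigma> \<delta> q A) (lang \<Sigma> \<delta>' ?q' A')"
    using almost_eq_quot[OF assms(3), of w] quot_lang[OF w(1)] w(2) by metis
  then have "C = lang_class \<Sigma> (lang \<Sigma> \<delta>' ?q' A')" using C class_eq by metis
  then show "C \<in> S_dfa \<Sigma> Q' \<delta>' A'" using inQ unfolding S_dfa_def by auto
qed

theorem mainTheorem3:
  fixes \<Sigma> :: "'a set"
    and Q :: "'s set" and \<delta> :: "'s \<Rightarrow> 'a \<Rightarrow> 's" and q0 :: 's and A :: "'s set"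
    and Q' :: "'t set" and \<delta>' :: "'t \<Rightarrow> 'a \<Rightarrow> 't" and q0' :: 't and A' :: "'t set"
  assumes "dfa \<Sigma> Q \<delta> q0 A"
    and "dfa \<Sigma> Q' \<delta>' q0' A'"
    and "almost_eq (lang \<Sigma> \<delta> q0 A) (lang \<Sigma> \<delta>' q0' A')"
  shows "S_dfa \<Sigma> Q \<delta> A = S_dfa \<Sigma> Q' \<delta>' A'"
  using one_dir[OF assms] one_dir[OF assms(2,1) almost_eq_sym[OF assms(3)]] by blast

end
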